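(* Let $\mathcal{T}$ be a triangulation of $C(m,2d+1)$, $v\in[m]$, and let $S,R$ be $2d$-simplices of $\mathcal{T}\backslash v$ (with $S\cap R$ of size $2d$). Then $S\cap R$ cannot be both a lower facet of $S$ and a lower facet of $R$; similarly $S\cap R$ cannot be both an upper facet of $S$ and an upper facet of $R$.
   Context: $C(V,n)$ is the cyclic polytope on a finite ordered set $V$ (convex hull of $(t_v,\dots,t_v^n)$, $t_v$ increasing); $C(m,n)=C([m],n)$; a triangulation of it is a set of $(n+1)$-subsets whose geometric simplices form a simplicial complex covering it. For a triangulation $\mathcal{T}$ of $C(m,2d+1)$ and $v\in[m]$, $\mathcal{T}\backslash v=\{S\setminus\{v\}: S\in\mathcal{T},\ v\in S\}$, a set of $2d$-simplices ($(2d+1)$-subsets of $[m]\setminus\{v\}$). Let $[m]_{v+}=\{1,\dots,v-1,x,y,v+1,\dots,m\}$ ordered with $v-1<x<y<v+1$. The circuits of $C(V,2d+1)$ are the pairs $(Z,Z')$ of disjoint subsets with, after listing $Z\cup Z'$ increasingly as $c_0<c_1<\dots<c_{2d+2}$, one of $Z,Z'$ equal to $\{c_1,c_3,\dots,c_{2d+1}\}$ and the other to $\{c_0,c_2,\dots,c_{2d+2}\}$. For a $2d$-simplex $S$ of $\mathcal{T}\backslash v$, the set $S\cup\{x,y\}$ has $2d+3$ elements and so splits uniquely into the two halves of a circuit of $C([m]_{v+},2d+1)$; since $x,y$ are adjacent they lie in different halves, and we write these halves as $S_-\cup\{x\}$ and $S_+\cup\{y\}$ with $S=S_-\sqcup S_+$.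 For $s\in S$, $S\setminus\{s\}$ is a lower facet of $S$ if $s\in S_+$ and an upper facet of $S$ if $s\in S_-$. *)

theory Defs
  imports "HOL-Analysis.Analysis"
begin

(* Point of the moment curve in R^n, coordinates indexed by a finite linearly ordered
   type 'n with |'n| = n; the k-th coordinate (k = 1..n, in the order of 'n) is t^k. *)
definition moment_pt :: "real \<Rightarrow> real ^ ('n::{finite,linorder})" where
  "moment_pt s = (\<chi> i. s ^ card {j. j \<le> i})"

definition is_triangulation ::
  "(nat \<Rightarrow> 'a::euclidean_space) \<Rightarrow> nat \<Rightarrow> nat set \<Rightarrow> nat set set \<Rightarrow> bool" where
  "is_triangulation p k V T \<longleftrightarrow>
     (\<forall>S\<in>T. S \<subseteq> V \<and> card S = k + 1 \<and> \<not> affine_dependent (p ` S)) \<and>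
     (\<Union>S\<in>T. convex hull (p ` S)) = convex hull (p ` V) \<and>
     (\<forall>S\<in>T. \<forall>S'\<in>T. convex hull (p ` S) \<inter> convex hull (p ` S') = convex hull (p ` (S \<inter> S')))"

definition cyclic_triangulation ::
  "'n::{finite,linorder} itself \<Rightarrow> (nat \<Rightarrow> real) \<Rightarrow> nat \<Rightarrow> nat set set \<Rightarrow> bool" where
  "cyclic_triangulation (_::'n::{finite,linorder} itself) t m T \<longleftrightarrow>
     is_triangulation (\<lambda>u. (moment_pt (t u) :: real ^ 'n::{finite,linorder})) (card (UNIV :: 'n::{finite,linorder} set)) {1..m} T"

definition tri_del :: "nat set set \<Rightarrow> nat \<Rightarrow> nat set set" where
  "tri_del T v = {S - {v} | S. S \<in> T \<and> v \<in> S}"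

definition even_half :: "nat set \<Rightarrow> nat set" where
  "even_half A = {sorted_list_of_set A ! i | i. i < card A \<and> even i}"
definition odd_half :: "nat set \<Rightarrow> nat set" where
  "odd_half A = {sorted_list_of_set A ! i | i. i < card A \<and> odd i}"

(* The ordered set [m]_{v+} modelled inside nat: u (u \<noteq> v) is represented by 4u,
   x by 4v-1 and y by 4v+1, so that v-1 < x < y < v+1. *)
definition vx :: "nat \<Rightarrow> nat" where "vx v = 4 * v - 1"
definition vy :: "nat \<Rightarrow> nat" where "vy v = 4 * v + 1"
definition vplus :: "nat \<Rightarrow> nat \<Rightarrow> nat set" where
  "vplus m v = (\<lambda>u. 4 * u) ` ({1..m} - {v}) \<union> {vx v, vy v}"

definition is_circuit :: "nat set \<Rightarrow> nat \<Rightarrow> nat set \<Rightarrow> nat set \<Rightarrow> bool" where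
  "is_circuit V d Z Z' \<longleftrightarrow> Z \<subseteq> V \<and> Z' \<subseteq> V \<and> Z \<inter> Z' = {} \<and>
     card (Z \<union> Z') = 2 * d + 3 \<and>
     ({Z, Z'} = {odd_half (Z \<union> Z'), even_half (Z \<union> Z')})"

(* For a 2d-simplex S of T\v: the circuit of C([m]_{v+},2d+1) supported on S \<union> {x,y},
   with halves S_- \<union> {x} and S_+ \<union> {y}. *)
definition S_minus :: "nat \<Rightarrow> nat \<Rightarrow> nat \<Rightarrow> nat set \<Rightarrow> nat set" where
  "S_minus m d v S = {s \<in> S. \<exists>Z Z'. is_circuit (vplus m v) d Z Z' \<and>
      Z \<union> Z' = (\<lambda>u. 4 * u) ` S \<union> {vx v, vy v} \<and> vx v \<in> Z \<and> 4 * s \<in> Z}"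
definition S_plus :: "nat \<Rightarrow> nat \<Rightarrow> nat \<Rightarrow> nat set \<Rightarrow> nat set" where
  "S_plus m d v S = {s \<in> S. \<exists>Z Z'. is_circuit (vplus m v) d Z Z' \<and>
      Z \<union> Z' = (\<lambda>u. 4 * u) ` S \<union> {vx v, vy v} \<and> vy v \<in> Z' \<and> 4 * s \<in> Z'}"

definition lower_facet :: "nat \<Rightarrow> nat \<Rightarrow> nat \<Rightarrow> nat set \<Rightarrow> nat set \<Rightarrow> bool" where
  "lower_facet m d v S F \<longleftrightarrow> (\<exists>s \<in> S_plus m d v S. F = S - {s})"
definition upper_facet :: "nat \<Rightarrow> nat \<Rightarrow> nat \<Rightarrow> nat set \<Rightarrow> nat set \<Rightarrow> bool" where
  "upper_facet m d v S F \<longleftrightarrow> (\<exists>s \<in> S_minus m d v S. F = S - {s})"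

end

theory Submission
  imports Defs "HOL-Computational_Algebra.Polynomial"
begin


lemma rank_nth:
  fixes A :: "nat set"
  assumes "finite A" "i < card A"
  shows "card {w\<in>A. w < sorted_list_of_set A ! i} = i"
proof -
  let ?xs = "sorted_list_of_set A"
  have s: "sorted_wrt (<) ?xs" and l: "length ?xs = card A" and st: "set ?xs = A"
    using assms by auto
  have d: "distinct ?xs" by simp
  have "{w\<in>A. w < ?xs!i} = (\<lambda>j. ?xs!j) ` {..<i}"
  proof (intro set_eqI iffI)
    fix w assume "w \<in> {w\<in>A. w < ?xs!i}"
    hence w: "w\<in>A" "w < ?xs!i" by auto
    then obtain j where j: "j < length ?xs" "w = ?xs!j" by (metis in_set_conv_nth st)
    have "j < i"
    proof (rule ccontr)
      assume "\<not> j < i"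
      hence "i = j \<or> i < j" by auto
      thus False using j w s l assms(2) sorted_wrt_nth_less[OF s, of i j] by auto
    qed
    then show "w \<in> (\<lambda>j. ?xs!j) ` {..<i}" using j by auto
  next
    fix w assume "w \<in> (\<lambda>j. ?xs!j) ` {..<i}"
    then obtain j where "j < i" "w = ?xs!j" by auto
    then show "w \<in> {w\<in>A. w < ?xs!i}"
      using s l st assms(2) sorted_wrt_nth_less[OF s, of j i] by auto
  qed
  moreover have "inj_on (\<lambda>j. ?xs!j) {..<i}"
    using d l assms(2) by (auto simp: inj_on_def nth_eq_iff_index_eq)
  ultimately show ?thesis by (simp add: card_image)
qed

lemma odd_half_rank:
  assumes "finite A" "z \<in> odd_half A" shows "odd (card {w\<in>A. w < z})"
  using assms rank_nth unfolding odd_half_def by auto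

lemma even_half_rank:
  assumes "finite A" "z \<in> even_half A" shows "even (card {w\<in>A. w < z})"
  using assms rank_nth unfolding even_half_def by auto

lemma rk_bij: "bij_betw (\<lambda>i::'n::{finite,linorder}. card {j. j \<le> i}) UNIV {1..CARD('n)}"
proof -
  let ?f = "\<lambda>i::'n. card {j. j \<le> i}"
  have mono: "?f i < ?f i'" if "i < i'" for i i'
    proof (rule psubset_card_mono)
    show "{j. j \<le> i} \<subset> {j. j \<le> i'}" using that by (auto simp: set_eq_iff) (metis order.refl leD)
  qed auto
  have inj: "inj ?f"
  proof (rule injI)
    fix i i' assume "?f i = ?f i'"
    thus "i = i'" using mono[of i i'] mono[of i' i] by (cases i i' rule: linorder_cases) auto
  qed
  have sub: "?f ` UNIV \<subseteq> {1..CARD('n)}"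
  proof
    fix k assume "k \<in> ?f ` UNIV"
    then obtain i where k: "k = ?f i" by auto
    have "?f i > 0" by (subst card_gt_0_iff) auto
    moreover have "?f i \<le> CARD('n)" by (rule card_mono) auto
    ultimately show "k \<in> {1..CARD('n)}" using k by auto
  qed
  have "card (?f ` UNIV) = CARD('n)" using inj by (simp add: card_image)
  hence "?f ` UNIV = {1..CARD('n)}" using sub by (intro card_subset_eq) auto
  thus ?thesis using inj by (simp add: bij_betw_def)
qed

definition Lf :: "real poly \<Rightarrow> real^'n::{finite,linorder} \<Rightarrow> real" where
  "Lf Q x = coeff Q 0 + (\<Sum>i\<in>UNIV. coeff Q (card {j. j \<le> i}) * x$i)"

lemma Lf_moment:
  assumes "degree Q \<le> CARD('n)"
  shows "Lf Q (moment_pt s :: real^'n::{finite,linorder}) = poly Q s"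
proof -
  let ?n = "CARD('n)"
  have "Lf Q (moment_pt s :: real^('n::{finite,linorder})) = coeff Q 0 + (\<Sum>i\<in>UNIV. coeff Q (card {j. j \<le> i}) * s ^ (card {j::'n::{finite,linorder}. j \<le> i}))"
    by (simp add: Lf_def moment_pt_def)
  also have "(\<Sum>i\<in>UNIV. coeff Q (card {j. j \<le> i}) * s ^ (card {j::'n::{finite,linorder}. j \<le> i})) = (\<Sum>k\<in>{1..?n}. coeff Q k * s ^ k)"
    using sum.reindex_bij_betw[OF rk_bij, of "\<lambda>k. coeff Q k * s ^ k"] by simp
  also have "coeff Q 0 + (\<Sum>k\<in>{1..?n}. coeff Q k * s ^ k) = (\<Sum>k\<in>insert 0 {1..?n}. coeff Q k * s ^ k)"
    by simp
  also have "insert 0 {1..?n} = {..?n}" by auto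
  also have "(\<Sum>k\<le>?n. coeff Q k * s ^ k) = (\<Sum>k\<le>degree Q. coeff Q k * s ^ k)"
    by (rule sum.mono_neutral_right) (use assms in \<open>auto simp: coeff_eq_0\<close>)
  also have "\<dots> = poly Q s" by (simp add: poly_altdef)
  finally show ?thesis .
qed

lemma Lf_affine:
  fixes X :: "(real^'n::{finite,linorder}) set"
  assumes "finite X" "sum u X = 1"
  shows "Lf Q (\<Sum>x\<in>X. u x *\<^sub>R x) = (\<Sum>x\<in>X. u x * Lf Q x)"
proof -
  have "Lf Q (\<Sum>x\<in>X. u x *\<^sub>R x) = coeff Q 0 * sum u X + (\<Sum>i\<in>UNIV. \<Sum>x\<in>X. coeff Q (card {j. j \<le> i}) * (u x * x$i))"
    using assms by (simp add: Lf_def sum_distrib_left)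
  also have "\<dots> = (\<Sum>x\<in>X. u x * coeff Q 0) + (\<Sum>x\<in>X. \<Sum>i\<in>UNIV. u x * (coeff Q (card {j. j \<le> i}) * x$i))"
    by (subst sum.swap) (simp add: sum_distrib_left sum_distrib_right mult_ac)
  also have "\<dots> = (\<Sum>x\<in>X. u x * Lf Q x)"
    by (simp add: Lf_def sum.distrib distrib_left sum_distrib_left)
  finally show ?thesis .
qed



lemma geo:
  fixes L :: "'a::euclidean_space \<Rightarrow> real" and P :: "'a set"
  assumes fin: "finite P" "P \<noteq> {}"
  and aff: "\<And>X u. finite X \<Longrightarrow> sum u X = 1 \<Longrightarrow> L (\<Sum>x\<in>X. u x *\<^sub>R x) = (\<Sum>x\<in>X. u x * L x)"
  and L0: "\<And>x. x\<in>P \<Longrightarrow> L x = 0"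
  and ab: "L pa * L pb > 0"
  and full: "affine hull (insert pb P) = UNIV"
  and int: "convex hull (insert pa P) \<inter> convex hull (insert pb P) = convex hull P"
  shows False
proof -
  have pbP: "pb \<notin> P" using L0 ab by force
  have fin2: "finite (insert pb P)" using fin by simp
  have "pa \<in> affine hull (insert pb P)" using full by simp
  then obtain u where u1: "sum u (insert pb P) = 1" and u2: "(\<Sum>x\<in>insert pb P. u x *\<^sub>R x) = pa"
    using affine_hull_finite[OF fin2] by auto
  have "L pa = (\<Sum>x\<in>insert pb P. u x * L x)" using aff[OF fin2 u1] u2 by simp
  also have "\<dots> = u pb * L pb" using pbP fin L0 by (simp add: sum.insert)
  finally have upb: "L pa = u pb * L pb" .
  have "0 < u pb * (L pb * L pb)" using ab upb by (simp add: mult_ac)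
  moreover have "L pb * L pb > 0" using ab by (metis mult_eq_0_iff not_real_square_gt_zero rel_simps(70))
  ultimately have upos: "u pb > 0" by (simp add: zero_less_mult_iff)
  define N where "N = real (card P)"
  have Npos: "N > 0" using fin by (simp add: N_def card_gt_0_iff)
  define M where "M = (\<Sum>x\<in>insert pb P. \<bar>u x\<bar>)"
  have M0: "M \<ge> 0" unfolding M_def by (simp add: sum_nonneg)
  define th where "th = 1 / (1 + N * M)"
  have NM: "1 + N * M > 0" using Npos M0 by (simp add: add_pos_nonneg)
  have thpos: "th > 0" using NM by (simp add: th_def)
  have th1: "1 - th = th * N * M" using NM by (simp add: th_def field_simps)
  have th2: "(1 - th) / N = th * M" using th1 Npos by (simp add: field_simps)
  define c where "c = (\<Sum>x\<in>P. (1/N) *\<^sub>R x)"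
  have cP: "c \<in> convex hull P"
    unfolding convex_hull_finite[OF fin(1)] c_def
    using Npos by (intro CollectI exI[of _ "\<lambda>_. 1/N"]) (simp add: N_def)
  define w where "w x = th * u x + (if x = pb then 0 else (1 - th) / N)" for x
  define q where "q = th *\<^sub>R pa + (1 - th) *\<^sub>R c"
  have sw: "sum w (insert pb P) = 1"
  proof -
    have "sum w (insert pb P) = th * sum u (insert pb P) + (\<Sum>x\<in>insert pb P. (if x = pb then 0 else (1 - th) / N))"
      by (simp add: w_def sum.distrib sum_distrib_left)
    also have "(\<Sum>x\<in>insert pb P. (if x = pb then 0 else (1 - th) / N)) = (\<Sum>x\<in>P. (if x = pb then 0 else (1 - th) / N))"
      by (subst sum.insert[OF fin(1) pbP]) simp
    also have "\<dots> = (\<Sum>x\<in>P. (1 - th) / N)"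
      by (rule sum.cong) (use pbP in auto)
    also have "\<dots> = 1 - th" using Npos by (simp add: N_def)
    finally show ?thesis using u1 by simp
  qed
  have qw: "(\<Sum>x\<in>insert pb P. w x *\<^sub>R x) = q"
  proof -
    have "(\<Sum>x\<in>insert pb P. w x *\<^sub>R x) = th *\<^sub>R (\<Sum>x\<in>insert pb P. u x *\<^sub>R x) + (\<Sum>x\<in>insert pb P. (if x = pb then 0 else (1 - th) / N) *\<^sub>R x)"
      by (simp add: w_def scaleR_add_left sum.distrib scaleR_sum_right)
    also have "(\<Sum>x\<in>insert pb P. (if x = pb then 0 else (1 - th) / N) *\<^sub>R x) = (\<Sum>x\<in>P. (if x = pb then 0 else (1 - th) / N) *\<^sub>R x)"
      by (subst sum.insert[OF fin(1) pbP]) simp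
    also have "\<dots> = (\<Sum>x\<in>P. ((1 - th) / N) *\<^sub>R x)"
      by (rule sum.cong) (use pbP in auto)
    also have "\<dots> = (1 - th) *\<^sub>R c" by (simp add: c_def scaleR_sum_right)
    finally show ?thesis using u2 by (simp add: q_def)
  qed
  have wnn: "\<forall>x\<in>insert pb P. 0 \<le> w x"
  proof
    fix x assume x: "x \<in> insert pb P"
    show "0 \<le> w x"
    proof (cases "x = pb")
      case True thus ?thesis using upos thpos by (simp add: w_def)
    next
      case False
      have "\<bar>u x\<bar> \<le> M" unfolding M_def using x fin2 by (intro member_le_sum) auto
      hence "- M \<le> u x" by linarith
      hence "th * (- M) \<le> th * u x" using thpos by (intro mult_left_mono) auto
      thus ?thesis using False th2 by (simp add: w_def)
    qed
  qed
  have q2: "q \<in> convex hull (insert pb P)"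
    unfolding convex_hull_finite[OF fin2] using wnn sw qw by blast
  have q1: "q \<in> convex hull (insert pa P)"
  proof -
    have "pa \<in> convex hull (insert pa P)" by (simp add: hull_inc)
    moreover have "c \<in> convex hull (insert pa P)" using cP hull_mono[of P "insert pa P"] by auto
    moreover have "th \<le> 1" using th1 Npos M0 by (metis diff_ge_0_iff_ge mult_nonneg_nonneg thpos less_imp_le)
    ultimately show ?thesis unfolding q_def
      using convexD[OF convex_convex_hull, of pa _ c "th" "1 - th"] thpos by auto
  qed
  have "q \<in> convex hull P" using q1 q2 int by blast
  then obtain v where v: "\<forall>x\<in>P. 0 \<le> v x" "sum v P = 1" "(\<Sum>x\<in>P. v x *\<^sub>R x) = q"
    unfolding convex_hull_finite[OF fin(1)] by blast
  have "L q = 0" using aff[OF fin(1) v(2)] v(3) L0 by simp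
  moreover have "L q = (\<Sum>x\<in>insert pb P. w x * L x)" using aff[OF fin2 sw] qw by simp
  moreover have "\<dots> = w pb * L pb" using pbP fin L0 by (simp add: sum.insert)
  moreover have "w pb * L pb = th * L pa" using upb by (simp add: w_def)
  moreover have "L pa \<noteq> 0" using ab by auto
  ultimately show False using thpos by simp
qed



lemma prod_sign:
  fixes t :: "nat \<Rightarrow> real"
  assumes "finite W" "a \<notin> W" "strict_mono_on D t" "W \<subseteq> D" "a \<in> D"
  shows "(\<Prod>w\<in>W. (t a - t w)) \<noteq> 0 \<and> ((\<Prod>w\<in>W. (t a - t w)) > 0 \<longleftrightarrow> even (card {w\<in>W. a < w}))"
  using assms
proof (induction W rule: finite_induct)
  case empty thus ?case by simp
next
  case (insert x W)
  define p where "p = (\<Prod>w\<in>W. (t a - t w))"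
  define k where "k = card {w\<in>W. a < w}"
  have IH: "p \<noteq> 0" "p > 0 \<longleftrightarrow> even k"
    using insert unfolding p_def k_def by auto
  have xa: "x \<noteq> a" using insert by auto
  have xD: "x \<in> D" using insert by auto
  have fW: "finite {w\<in>W. a < w}" using insert by auto
  have Pe: "(\<Prod>w\<in>insert x W. (t a - t w)) = (t a - t x) * p"
    unfolding p_def using insert(1,2) by simp
  show ?case
  proof (cases "a < x")
    case True
    hence c: "t a - t x < 0" using insert(5) xD \<open>a \<in> D\<close> by (auto dest: strict_mono_onD)
    have "{w\<in>insert x W. a < w} = insert x {w\<in>W. a < w}" using True by auto
    hence C: "card {w\<in>insert x W. a < w} = Suc k" unfolding k_def using fW insert(2) by simp
    have "(t a - t x) * p \<noteq> 0" using c IH(1) by simp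
    moreover have "(t a - t x) * p > 0 \<longleftrightarrow> p < 0" using c by (simp add: zero_less_mult_iff)
    moreover have "p < 0 \<longleftrightarrow> \<not> p > 0" using IH(1) by linarith
    ultimately show ?thesis using Pe C IH(2) by simp
  next
    case False
    hence "x < a" using xa by auto
    hence c: "t a - t x > 0" using insert(5) xD \<open>a \<in> D\<close> by (auto dest: strict_mono_onD)
    have "{w\<in>insert x W. a < w} = {w\<in>W. a < w}" using False by auto
    hence C: "card {w\<in>insert x W. a < w} = k" unfolding k_def by simp
    have "(t a - t x) * p \<noteq> 0" using c IH(1) by simp
    moreover have "(t a - t x) * p > 0 \<longleftrightarrow> p > 0" using c by (simp add: zero_less_mult_iff)
    ultimately show ?thesis using Pe C IH(2) by simp
  qed
qed



lemma four_ne1: "(v::nat) \<ge> 1 \<Longrightarrow> 4 * s \<noteq> 4 * v - 1"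
  by presburger
lemma four_ne2: "4 * s \<noteq> 4 * v + (1::nat)"
  by presburger

lemma rankA:
  fixes S :: "nat set"
  assumes "finite S" "v \<ge> 1"
  shows "card {w\<in>(\<lambda>u. 4 * u) ` S \<union> {vx v, vy v}. w < z} = card {s\<in>S. 4 * s < z} + card {w\<in>{vx v, vy v}. w < z}"
proof -
  have "{w\<in>(\<lambda>u. 4 * u) ` S \<union> {vx v, vy v}. w < z} = (\<lambda>u. 4 * u) ` {s\<in>S. 4 * s < z} \<union> {w\<in>{vx v, vy v}. w < z}"
    by auto
  moreover have "(\<lambda>u. 4 * u) ` {s\<in>S. 4 * s < z} \<inter> {w\<in>{vx v, vy v}. w < z} = {}"
    using four_ne1[OF assms(2)] four_ne2 by (auto simp: vx_def vy_def)
  moreover have "card ((\<lambda>u. 4 * u) ` {s\<in>S. 4 * s < z}) = card {s\<in>S. 4 * s < z}"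
    by (rule card_image) (auto simp: inj_on_def)
  ultimately show ?thesis using assms(1) by (simp add: card_Un_disjoint)
qed

lemma rank_4a:
  fixes S :: "nat set"
  assumes "finite S" "v \<ge> 1" "a \<noteq> v"
  shows "card {w\<in>(\<lambda>u. 4 * u) ` S \<union> {vx v, vy v}. w < 4 * a} = card {s\<in>S. s < a} + (if v < a then 2 else 0)"
proof -
  have "{s\<in>S. 4 * s < 4 * a} = {s\<in>S. s < a}" by auto
  moreover have "card {w\<in>{vx v, vy v}. w < 4 * a} = (if v < a then 2 else 0)"
  proof (cases "v < a")
    case True
    hence "{w\<in>{vx v, vy v}. w < 4 * a} = {vx v, vy v}" by (auto simp: vx_def vy_def)
    moreover have "vx v \<noteq> vy v" by (simp add: vx_def vy_def)
    ultimately show ?thesis using True by simp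
  next
    case False
    hence "a < v" using assms(3) by auto
    hence "{w\<in>{vx v, vy v}. w < 4 * a} = {}" by (auto simp: vx_def vy_def)
    thus ?thesis using False by simp
  qed
  ultimately show ?thesis using rankA[OF assms(1,2), of "4 * a"] by simp
qed

lemma rank_vy:
  fixes S :: "nat set"
  assumes "finite S" "v \<ge> 1" "v \<notin> S"
  shows "card {w\<in>(\<lambda>u. 4 * u) ` S \<union> {vx v, vy v}. w < vy v} = card {s\<in>S. s < v} + 1"
proof -
  have "4 * s < vy v \<longleftrightarrow> s < v" if "s \<in> S" for s
  proof -
    have "s \<noteq> v" using that assms(3) by auto
    thus ?thesis by (simp add: vy_def) arith
  qed
  hence "{s\<in>S. 4 * s < vy v} = {s\<in>S. s < v}" by auto
  moreover have "{w\<in>{vx v, vy v}. w < vy v} = {vx v}" using assms(2) by (auto simp: vx_def vy_def)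
  ultimately show ?thesis using rankA[OF assms(1,2), of "vy v"] by simp
qed

lemma rank_vx:
  fixes S :: "nat set"
  assumes "finite S" "v \<ge> 1" "v \<notin> S"
  shows "card {w\<in>(\<lambda>u. 4 * u) ` S \<union> {vx v, vy v}. w < vx v} = card {s\<in>S. s < v}"
proof -
  have "{s\<in>S. 4 * s < vx v} = {s\<in>S. s < v}" using assms(2,3) by (auto simp: vx_def)
  moreover have "{w\<in>{vx v, vy v}. w < vx v} = {}" using assms(2) by (auto simp: vx_def vy_def)
  ultimately show ?thesis using rankA[OF assms(1,2), of "vx v"] by simp
qed

lemma same_half:
  assumes "finite A" "Z' = odd_half A \<or> Z' = even_half A" "z1 \<in> Z'" "z2 \<in> Z'"
  shows "even (card {w\<in>A. w < z1}) \<longleftrightarrow> even (card {w\<in>A. w < z2})"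
  using assms odd_half_rank even_half_rank by metis

lemma plus_parity:
  assumes "a \<in> S_plus m d v S" "finite S" "v \<notin> S" "v \<ge> 1"
  shows "even (card {s\<in>S. s < a}) \<longleftrightarrow> odd (card {s\<in>S. s < v})"
proof -
  define A where "A = (\<lambda>u. 4 * u) ` S \<union> {vx v, vy v}"
  from assms(1) obtain Z Z' where a: "a \<in> S" and c: "is_circuit (vplus m v) d Z Z'"
    and U: "Z \<union> Z' = A" and y: "vy v \<in> Z'" "4 * a \<in> Z'"
    unfolding S_plus_def A_def by blast
  have "{Z, Z'} = {odd_half A, even_half A}" using c U unfolding is_circuit_def by simp
  hence h: "Z' = odd_half A \<or> Z' = even_half A" by (metis insertCI insertE empty_iff)
  have fA: "finite A" using assms(2) by (simp add: A_def)
  have av: "a \<noteq> v" using a assms(3) by auto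
  have "even (card {w\<in>A. w < 4 * a}) \<longleftrightarrow> even (card {w\<in>A. w < vy v})"
    by (rule same_half[OF fA h y(2) y(1)])
  thus ?thesis unfolding A_def rank_4a[OF assms(2,4) av] rank_vy[OF assms(2,4,3)] by (cases "v < a") simp_all
qed

lemma minus_parity:
  assumes "a \<in> S_minus m d v S" "finite S" "v \<notin> S" "v \<ge> 1"
  shows "even (card {s\<in>S. s < a}) \<longleftrightarrow> even (card {s\<in>S. s < v})"
proof -
  define A where "A = (\<lambda>u. 4 * u) ` S \<union> {vx v, vy v}"
  from assms(1) obtain Z Z' where a: "a \<in> S" and c: "is_circuit (vplus m v) d Z Z'"
    and U: "Z \<union> Z' = A" and y: "vx v \<in> Z" "4 * a \<in> Z"
    unfolding S_minus_def A_def by blast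
  have "{Z, Z'} = {odd_half A, even_half A}" using c U unfolding is_circuit_def by simp
  hence h: "Z = odd_half A \<or> Z = even_half A" by (metis insertCI insertE empty_iff)
  have fA: "finite A" using assms(2) by (simp add: A_def)
  have av: "a \<noteq> v" using a assms(3) by auto
  have "even (card {w\<in>A. w < 4 * a}) \<longleftrightarrow> even (card {w\<in>A. w < vx v})"
    by (rule same_half[OF fA h y(2) y(1)])
  thus ?thesis unfolding A_def rank_4a[OF assms(2,4) av] rank_vx[OF assms(2,4,3)] by (cases "v < a") simp_all
qed



lemma par_arith:
  fixes A B C d :: nat
  assumes "A + B + (if p then 1 else 0) = 2 * d + 1"
    "even B \<longleftrightarrow> (even (C + (if q then 1 else 0)) \<longleftrightarrow> e)" "p \<longleftrightarrow> \<not> q"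
  shows "even A \<longleftrightarrow> (even C \<longleftrightarrow> e)"
  using assms by (cases e; cases p) (simp_all; presburger)+

lemma core:
  fixes t :: "nat \<Rightarrow> real" and T :: "nat set set"
  assumes card: "CARD('n::{finite,linorder}) = 2 * d + 1"
  and tm: "strict_mono_on {1..m} t"
  and tri: "cyclic_triangulation TYPE('n) t m T"
  and S1: "S1 \<in> T" and R1: "R1 \<in> T"
  and F: "S1 = insert v (insert a F)" "R1 = insert v (insert b F)"
  and nin: "a \<notin> F" "b \<notin> F" "v \<notin> F" "a \<noteq> v" "b \<noteq> v" "a \<noteq> b"
  and par: "even (card {s\<in>insert a F. s < a}) \<longleftrightarrow> (even (card {s\<in>insert a F. s < v}) \<longleftrightarrow> e)"
           "even (card {s\<in>insert b F. s < b}) \<longleftrightarrow> (even (card {s\<in>insert b F. s < v}) \<longleftrightarrow> e)"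
  shows False
proof -
  define p where "p = (\<lambda>u. moment_pt (t u) :: real^('n::{finite,linorder}))"
  have tr: "is_triangulation p CARD('n) {1..m} T"
    using tri unfolding cyclic_triangulation_def p_def by simp
  have t1: "\<forall>S\<in>T. S \<subseteq> {1..m} \<and> card S = CARD('n) + 1 \<and> \<not> affine_dependent (p ` S)"
    using tr unfolding is_triangulation_def by (rule conjunct1)
  have t3: "\<forall>S\<in>T. \<forall>S'\<in>T. convex hull (p ` S) \<inter> convex hull (p ` S') = convex hull (p ` (S \<inter> S'))"
    using tr unfolding is_triangulation_def by (rule conjunct2[THEN conjunct2])
  have hS: "S1 \<subseteq> {1..m}" "card S1 = CARD('n) + 1" "\<not> affine_dependent (p ` S1)"
    using bspec[OF t1 S1] by auto
  have hR: "R1 \<subseteq> {1..m}" "card R1 = CARD('n) + 1" "\<not> affine_dependent (p ` R1)"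
    using bspec[OF t1 R1] by auto
  have hI: "convex hull (p ` S1) \<inter> convex hull (p ` R1) = convex hull (p ` (S1 \<inter> R1))"
    using bspec[OF bspec[OF t3 S1] R1] .
  define W where "W = insert v F"
  have SR: "S1 \<inter> R1 = W" using F nin unfolding W_def by auto
  have finS: "finite S1" using hS(2) card.infinite by fastforce
  have finF: "finite F" using finS F(1) by simp
  have finW: "finite W" using finF W_def by simp
  have aW: "a \<notin> W" and bW: "b \<notin> W" using nin W_def by auto
  have "S1 = insert a W" using F(1) unfolding W_def by auto
  hence cW: "card W = 2 * d + 1" using hS(2) card finW aW by simp
  have WD: "W \<subseteq> {1..m}" "a \<in> {1..m}" "b \<in> {1..m}" using hS(1) hR(1) F W_def by auto
  define Q where "Q = (\<Prod>w\<in>W. [:- t w, 1:])"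
  have degQ: "degree Q \<le> CARD('n)"
  proof -
    have "degree Q \<le> sum (degree \<circ> (\<lambda>w. [:- t w, 1:])) W" unfolding Q_def by (rule degree_prod_sum_le[OF finW])
    also have "\<dots> = card W" by simp
    finally show ?thesis using cW card by simp
  qed
  define L where "L = (Lf Q :: real^('n::{finite,linorder}) \<Rightarrow> real)"
  have Lp: "L (p s) = (\<Prod>w\<in>W. (t s - t w))" for s
    unfolding L_def p_def using Lf_moment[OF degQ] by (simp add: Q_def poly_prod)
  define P where "P = p ` W"
  have L0: "L x = 0" if xP: "x \<in> P" for x
  proof -
    obtain w where w: "w \<in> W" "x = p w" using xP P_def by auto
    show ?thesis using w finW by (auto simp: Lp)
  qed
  have sa: "L (p a) \<noteq> 0 \<and> (L (p a) > 0 \<longleftrightarrow> even (card {w\<in>W. a < w}))"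
    unfolding Lp by (rule prod_sign[OF finW aW tm WD(1) WD(2)])
  have sb: "L (p b) \<noteq> 0 \<and> (L (p b) > 0 \<longleftrightarrow> even (card {w\<in>W. b < w}))"
    unfolding Lp by (rule prod_sign[OF finW bW tm WD(1) WD(3)])
  have gt: "card {w\<in>W. x < w} + card {w\<in>W. w < x} = card W" if "x \<notin> W" for x
  proof -
    have "{w\<in>W. x < w} \<union> {w\<in>W. w < x} = W" using that by auto (metis linorder_neqE_nat)
    moreover have "{w\<in>W. x < w} \<inter> {w\<in>W. w < x} = {}" by auto
    ultimately show ?thesis using finW card_Un_disjoint[of "{w\<in>W. x < w}" "{w\<in>W. w < x}"] by simp
  qed
  have G: "card {w\<in>W. w < x} = card {w\<in>F. w < x} + (if v < x then 1 else 0)" for x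
  proof (cases "v < x")
    case True
    hence "{w\<in>W. w < x} = insert v {w\<in>F. w < x}" unfolding W_def by auto
    thus ?thesis using True finF nin(3) by simp
  next
    case False
    hence "{w\<in>W. w < x} = {w\<in>F. w < x}" unfolding W_def by auto
    thus ?thesis using False by simp
  qed
  have H1: "card {s\<in>insert x F. s < x} = card {w\<in>F. w < x}" for x
  proof -
    have "{s\<in>insert x F. s < x} = {w\<in>F. w < x}" by auto
    thus ?thesis by simp
  qed
  have H2: "card {s\<in>insert x F. s < v} = card {w\<in>F. w < v} + (if x < v then 1 else 0)" if "x \<notin> F" for x
  proof (cases "x < v")
    case True
    hence "{s\<in>insert x F. s < v} = insert x {w\<in>F. w < v}" by auto
    thus ?thesis using True finF that by simp
  next
    case False
    hence "{s\<in>insert x F. s < v} = {w\<in>F. w < v}" by auto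
    thus ?thesis using False by simp
  qed
  have key: "even (card {w\<in>W. x < w}) \<longleftrightarrow> (even (card {w\<in>F. w < v}) \<longleftrightarrow> e)"
    if "x \<notin> W" "x \<noteq> v" "x \<notin> F"
       "even (card {s\<in>insert x F. s < x}) \<longleftrightarrow> (even (card {s\<in>insert x F. s < v}) \<longleftrightarrow> e)" for x
  proof -
    have c1: "card {w\<in>W. x < w} + card {w\<in>F. w < x} + (if v < x then 1 else 0) = 2 * d + 1"
      using gt[OF that(1)] G[of x] cW by simp
    have c2: "even (card {w\<in>F. w < x}) \<longleftrightarrow> (even (card {w\<in>F. w < v} + (if x < v then 1 else 0)) \<longleftrightarrow> e)"
      using that(4) H1[of x] H2[OF that(3)] by simp
    have "v < x \<longleftrightarrow> \<not> x < v" using that(2) by auto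
    thus ?thesis using par_arith[OF c1 c2] by blast
  qed
  have ka: "even (card {w\<in>W. a < w}) \<longleftrightarrow> (even (card {w\<in>F. w < v}) \<longleftrightarrow> e)"
    by (rule key[OF aW nin(4) nin(1) par(1)])
  have kb: "even (card {w\<in>W. b < w}) \<longleftrightarrow> (even (card {w\<in>F. w < v}) \<longleftrightarrow> e)"
    by (rule key[OF bW nin(5) nin(2) par(2)])
  have ab: "L (p a) * L (p b) > 0"
  proof -
    have "L (p a) > 0 \<longleftrightarrow> L (p b) > 0" using sa sb ka kb by simp
    thus ?thesis using sa sb by (smt (verit) mult_neg_neg mult_pos_pos)
  qed
  have surj: "(\<lambda>i::'n::{finite,linorder}. card {j. j \<le> i}) ` UNIV = {1..CARD('n)}"
    using rk_bij by (rule bij_betw_imp_surj_on)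
  have "(1::nat) \<in> {1..CARD('n)}" by simp
  then obtain i0 :: "'n::{finite,linorder}" where i0: "card {j. j \<le> i0} = 1"
    unfolding surj[symmetric] by (auto simp del: One_nat_def)
  have injp: "inj_on p {1..m}"
  proof (rule inj_onI)
    fix x y assume xy: "x \<in> {1..m}" "y \<in> {1..m}" "p x = p y"
    hence "(p x) $ i0 = (p y) $ i0" by simp
    hence "t x = t y" using i0 by (simp add: p_def moment_pt_def)
    thus "x = y" using strict_mono_on_imp_inj_on[OF tm] xy(1,2) by (auto dest: inj_onD)
  qed
  have cardR: "card (p ` R1) = CARD('n) + 1"
    using hR(2) card_image[OF inj_on_subset[OF injp hR(1)]] by simp
  have "aff_dim (p ` R1) = int (CARD('n))"
    using aff_dim_affine_independent[OF hR(3)] cardR by simp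
  hence full: "affine hull (p ` R1) = UNIV"
    using aff_dim_eq_full[of "p ` R1"] by simp
  have eqS: "p ` S1 = insert (p a) P" and eqR: "p ` R1 = insert (p b) P"
    using F unfolding P_def W_def by auto
  show False
  proof (rule geo[of P L "p a" "p b"])
    show "finite P" using finW P_def by simp
    show "P \<noteq> {}" using P_def W_def by simp
    show "\<And>X u. finite X \<Longrightarrow> sum u X = 1 \<Longrightarrow> L (\<Sum>x\<in>X. u x *\<^sub>R x) = (\<Sum>x\<in>X. u x * L x)"
      unfolding L_def by (rule Lf_affine)
    show "\<And>x. x \<in> P \<Longrightarrow> L x = 0" by (rule L0)
    show "L (p a) * L (p b) > 0" by (rule ab)
    show "affine hull (insert (p b) P) = UNIV" using full unfolding eqR .
    show "convex hull (insert (p a) P) \<inter> convex hull (insert (p b) P) = convex hull P"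
      using hI unfolding eqS eqR SR P_def[symmetric] .
  qed
qed



lemma facet_setup:
  fixes T :: "nat set set"
  assumes tri: "cyclic_triangulation TYPE('n::{finite,linorder}) t m T"
    and card: "CARD('n) = 2 * d + 1"
    and Sin: "S \<in> tri_del T v" and Rin: "R \<in> tri_del T v"
    and cI: "card (S \<inter> R) = 2 * d"
    and aS: "a \<in> S" "S \<inter> R = S - {a}" and bR: "b \<in> R" "S \<inter> R = R - {b}"
  obtains S1 R1 where "S1 \<in> T" "R1 \<in> T"
    "S1 = insert v (insert a (S \<inter> R))" "R1 = insert v (insert b (S \<inter> R))"
    "a \<notin> S \<inter> R" "b \<notin> S \<inter> R" "v \<notin> S \<inter> R" "a \<noteq> v" "b \<noteq> v" "a \<noteq> b"
    "finite S" "finite R" "v \<notin> S" "v \<notin> R" "S = insert a (S \<inter> R)" "R = insert b (S \<inter> R)"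
proof -
  define p where "p = (\<lambda>u. moment_pt (t u) :: real^('n::{finite,linorder}))"
  have tr: "is_triangulation p CARD('n) {1..m} T"
    using tri unfolding cyclic_triangulation_def p_def by simp
  have t1: "\<forall>S\<in>T. S \<subseteq> {1..m} \<and> card S = CARD('n) + 1 \<and> \<not> affine_dependent (p ` S)"
    using tr unfolding is_triangulation_def by (rule conjunct1)
  obtain S1 where S1: "S1 \<in> T" "v \<in> S1" "S = S1 - {v}" using Sin unfolding tri_del_def by blast
  obtain R1 where R1: "R1 \<in> T" "v \<in> R1" "R = R1 - {v}" using Rin unfolding tri_del_def by blast
  have "card S1 = 2 * d + 2" using bspec[OF t1 S1(1)] card by simp
  hence fS1: "finite S1" using card.infinite by fastforce
  have "card R1 = 2 * d + 2" using bspec[OF t1 R1(1)] card by simp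
  hence fR1: "finite R1" using card.infinite by fastforce
  have cS: "card S = 2 * d + 1" using \<open>card S1 = 2 * d + 2\<close> S1 fS1 by simp
  have fS: "finite S" "finite R" using fS1 fR1 S1 R1 by auto
  have vS: "v \<notin> S" "v \<notin> R" using S1 R1 by auto
  have Sa: "S = insert a (S \<inter> R)" using aS by auto
  have Rb: "R = insert b (S \<inter> R)" using bR by auto
  have ab: "a \<noteq> b"
  proof
    assume "a = b"
    hence "S = R" using Sa Rb by simp
    hence "card (S \<inter> R) = 2 * d + 1" using cS by simp
    thus False using cI by simp
  qed
  show ?thesis
  proof (rule that[OF S1(1) R1(1)])
    show "S1 = insert v (insert a (S \<inter> R))" using S1 Sa by auto
    show "R1 = insert v (insert b (S \<inter> R))" using R1 Rb by auto
  qed (use aS bR vS ab fS Sa Rb in auto)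
qed

theorem lemma4p13:
  fixes t :: "nat \<Rightarrow> real" and m d v :: nat and T :: "nat set set" and S R :: "nat set"
  assumes "CARD('n::{finite,linorder}) = 2 * d + 1"
    and "strict_mono_on {1..m} t"
    and "cyclic_triangulation TYPE('n) t m T"
    and "v \<in> {1..m}"
    and "S \<in> tri_del T v" and "R \<in> tri_del T v"
    and "card (S \<inter> R) = 2 * d"
  shows "\<not> (lower_facet m d v S (S \<inter> R) \<and> lower_facet m d v R (S \<inter> R))
       \<and> \<not> (upper_facet m d v S (S \<inter> R) \<and> upper_facet m d v R (S \<inter> R))"
proof (intro conjI notI; elim conjE)
  have v1: "v \<ge> 1" using assms(4) by simp
  {
    assume "lower_facet m d v S (S \<inter> R)" "lower_facet m d v R (S \<inter> R)"
    then obtain a b where a: "a \<in> S_plus m d v S" "S \<inter> R = S - {a}"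
      and b: "b \<in> S_plus m d v R" "S \<inter> R = R - {b}"
      unfolding lower_facet_def by blast
    have aS: "a \<in> S" using a(1) unfolding S_plus_def by blast
    have bR: "b \<in> R" using b(1) unfolding S_plus_def by blast
    obtain S1 R1 where X: "S1 \<in> T" "R1 \<in> T"
      "S1 = insert v (insert a (S \<inter> R))" "R1 = insert v (insert b (S \<inter> R))"
      "a \<notin> S \<inter> R" "b \<notin> S \<inter> R" "v \<notin> S \<inter> R" "a \<noteq> v" "b \<noteq> v" "a \<noteq> b"
      "finite S" "finite R" "v \<notin> S" "v \<notin> R" "S = insert a (S \<inter> R)" "R = insert b (S \<inter> R)"
      using facet_setup[OF assms(3,1,5,6,7) aS a(2) bR b(2)] by blast
    have pa: "even (card {s\<in>S. s < a}) \<longleftrightarrow> (even (card {s\<in>S. s < v}) \<longleftrightarrow> False)"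
      using plus_parity[OF a(1) X(11) X(13) v1] by simp
    have pb: "even (card {s\<in>R. s < b}) \<longleftrightarrow> (even (card {s\<in>R. s < v}) \<longleftrightarrow> False)"
      using plus_parity[OF b(1) X(12) X(14) v1] by simp
    show False
      by (rule core[OF assms(1,2,3) X(1,2,3,4,5,6,7,8,9,10), of False])
         (use pa pb X(15,16) in metis)+
  }
  {
    assume "upper_facet m d v S (S \<inter> R)" "upper_facet m d v R (S \<inter> R)"
    then obtain a b where a: "a \<in> S_minus m d v S" "S \<inter> R = S - {a}"
      and b: "b \<in> S_minus m d v R" "S \<inter> R = R - {b}"
      unfolding upper_facet_def by blast
    have aS: "a \<in> S" using a(1) unfolding S_minus_def by blast
    have bR: "b \<in> R" using b(1) unfolding S_minus_def by blast
    obtain S1 R1 where X: "S1 \<in> T" "R1 \<in> T"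
      "S1 = insert v (insert a (S \<inter> R))" "R1 = insert v (insert b (S \<inter> R))"
      "a \<notin> S \<inter> R" "b \<notin> S \<inter> R" "v \<notin> S \<inter> R" "a \<noteq> v" "b \<noteq> v" "a \<noteq> b"
      "finite S" "finite R" "v \<notin> S" "v \<notin> R" "S = insert a (S \<inter> R)" "R = insert b (S \<inter> R)"
      using facet_setup[OF assms(3,1,5,6,7) aS a(2) bR b(2)] by blast
    have pa: "even (card {s\<in>S. s < a}) \<longleftrightarrow> (even (card {s\<in>S. s < v}) \<longleftrightarrow> True)"
      using minus_parity[OF a(1) X(11) X(13) v1] by simp
    have pb: "even (card {s\<in>R. s < b}) \<longleftrightarrow> (even (card {s\<in>R. s < v}) \<longleftrightarrow> True)"
      using minus_parity[OF b(1) X(12) X(14) v1] by simp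
    show False
      by (rule core[OF assms(1,2,3) X(1,2,3,4,5,6,7,8,9,10), of True])
         (use pa pb X(15,16) in metis)+
  }
qed

end
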